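(* Almost all finite simple graphs have a $Deg$-mate. That is, if $\mathcal{G}(n)$ denotes the set of isomorphism classes of simple graphs on $n$ vertices and $U_{Deg}(n)\subseteq \mathcal{G}(n)$ the set of those $G$ which are $Deg$-unique, then $\lim_{n\to\infty} |U_{Deg}(n)|/|\mathcal{G}(n)| = 0$.
   Context: All graphs are finite, simple (undirected, no loops, no parallel edges). For a graph $G=(V,E)$ and $v\in V$, $\deg(v)$ is the degree of $v$. The degree polynomial is $Deg(G;x)=\sum_{v\in V} x^{\deg(v)}$. For a graph polynomial $P$ (a map assigning to each graph a polynomial, invariant under isomorphism), a graph $H$ is a $P$-mate of $G$ if $P(G)=P(H)$ but $H$ is not isomorphic to $G$; $G$ is $P$-unique if it has no $P$-mate. "Almost all graphs" means the proportion of (isomorphism classes of) graphs of order $n$ with the property tends to $1$ as $n\to\infty$. *)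

theory Defs
  imports Complex_Main "HOL-Computational_Algebra.Polynomial"
begin

text \<open>A finite simple graph of order n is represented (up to isomorphism) by a
set of edges on the vertex set {0..<n}; each edge is a 2-element subset.\<close>

definition graphs :: "nat \<Rightarrow> nat set set set" where
  "graphs n = {E. E \<subseteq> {e. e \<subseteq> {..<n} \<and> card e = 2}}"

definition vdeg :: "nat set set \<Rightarrow> nat \<Rightarrow> nat" where
  "vdeg E v = card {e \<in> E. v \<in> e}"

definition deg_poly :: "nat \<Rightarrow> nat set set \<Rightarrow> int poly" where
  "deg_poly n E = (\<Sum>v<n. monom 1 (vdeg E v))"

definition graph_iso :: "nat \<Rightarrow> nat set set \<Rightarrow> nat \<Rightarrow> nat set set \<Rightarrow> bool" where
  "graph_iso n E m F \<longleftrightarrow> (\<exists>f. bij_betw f {..<n} {..<m} \<and> (\<lambda>e. f ` e) ` E = F)"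

definition deg_unique :: "nat \<Rightarrow> nat set set \<Rightarrow> bool" where
  "deg_unique n E \<longleftrightarrow>
     (\<forall>m F. F \<in> graphs m \<and> deg_poly m F = deg_poly n E \<longrightarrow> graph_iso n E m F)"

definition iso_classes :: "nat \<Rightarrow> nat set set set set" where
  "iso_classes n = {{F \<in> graphs n. graph_iso n E n F} | E. E \<in> graphs n}"

definition unique_classes :: "nat \<Rightarrow> nat set set set set" where
  "unique_classes n = {C \<in> iso_classes n. \<exists>E\<in>C. deg_unique n E}"

end

theory Submission
  imports Defs "HOL-Real_Asymp.Real_Asymp" "HOL-Library.FuncSet"
begin

lemma lim_bound: "(\<lambda>n::nat. (real n + 1) powr real n * real n powr real n / 2 powr (real n * (real n - 1) / 2)) \<longlonglongrightarrow> 0"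
  by real_asymp

lemma iso_refl: "graph_iso n E n E"
  unfolding graph_iso_def by (rule exI[of _ id]) auto

lemma iso_sym:
  assumes "E \<in> graphs n" "graph_iso n E n F"
  shows "graph_iso n F n E"
proof -
  obtain f where f: "bij_betw f {..<n} {..<n}" and F: "(\<lambda>e. f ` e) ` E = F"
    using assms(2) unfolding graph_iso_def by blast
  let ?g = "inv_into {..<n} f"
  have g: "bij_betw ?g {..<n} {..<n}" using f by (rule bij_betw_inv_into)
  have inj: "inj_on f {..<n}" using f bij_betw_def by blast
  have "(\<lambda>e. ?g ` e) ` F = (\<lambda>e. ?g ` f ` e) ` E" using F by auto
  also have "\<dots> = E"
  proof -
    have "\<And>e. e \<in> E \<Longrightarrow> ?g ` f ` e = e"
      using assms(1) inj unfolding graphs_def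
      by (intro inv_into_image_cancel) auto
    then have "(\<lambda>e. ?g ` f ` e) ` E = (\<lambda>e. e) ` E" by (rule image_cong[OF refl])
    then show ?thesis by simp
  qed
  finally show ?thesis unfolding graph_iso_def using g by blast
qed

lemma iso_trans:
  assumes "graph_iso n E n F" "graph_iso n F n G"
  shows "graph_iso n E n G"
proof -
  obtain f where f: "bij_betw f {..<n} {..<n}" and F: "(\<lambda>e. f ` e) ` E = F"
    using assms(1) unfolding graph_iso_def by blast
  obtain g where g: "bij_betw g {..<n} {..<n}" and G: "(\<lambda>e. g ` e) ` F = G"
    using assms(2) unfolding graph_iso_def by blast
  have "bij_betw (g \<circ> f) {..<n} {..<n}" using f g by (rule bij_betw_trans)
  moreover have "(\<lambda>e. (g \<circ> f) ` e) ` E = G" using F G by (auto simp: image_comp)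
  ultimately show ?thesis unfolding graph_iso_def by blast
qed

lemma graphs_finite: "finite (graphs n)"
proof -
  have "graphs n = Pow {e. e \<subseteq> {..<n} \<and> card e = 2}" unfolding graphs_def by auto
  moreover have "finite {e. e \<subseteq> {..<n} \<and> card e = 2}"
    by (rule finite_subset[of _ "Pow {..<n}"]) auto
  ultimately show ?thesis by simp
qed

lemma graphs_card: "card (graphs n) = 2 ^ (n choose 2)"
proof -
  have "card {e. e \<subseteq> {..<n} \<and> card e = 2} = n choose 2"
    using n_subsets[of "{..<n}" 2] by simp
  moreover have "graphs n = Pow {e. e \<subseteq> {..<n} \<and> card e = 2}"
    unfolding graphs_def by auto
  ultimately show ?thesis by (simp add: card_Pow)
qed

lemma class_card:
  assumes "E \<in> graphs n"
  shows "card {F \<in> graphs n. graph_iso n E n F} \<le> n ^ n"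
proof -
  have sub: "{F \<in> graphs n. graph_iso n E n F} \<subseteq> (\<lambda>f. (\<lambda>e. f ` e) ` E) ` ({..<n} \<rightarrow>\<^sub>E {..<n})"
  proof
    fix F assume "F \<in> {F \<in> graphs n. graph_iso n E n F}"
    then obtain f where f: "bij_betw f {..<n} {..<n}" and F: "(\<lambda>e. f ` e) ` E = F"
      unfolding graph_iso_def by blast
    let ?h = "restrict f {..<n}"
    have "?h \<in> {..<n} \<rightarrow>\<^sub>E {..<n}" using f by (auto simp: bij_betw_def)
    moreover have "(\<lambda>e. ?h ` e) ` E = F"
    proof -
      have "\<And>e. e \<in> E \<Longrightarrow> ?h ` e = f ` e"
        using assms unfolding graphs_def by (auto simp: restrict_def)
      then have "(\<lambda>e. ?h ` e) ` E = (\<lambda>e. f ` e) ` E" by (rule image_cong[OF refl])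
      then show ?thesis using F by simp
    qed
    ultimately show "F \<in> (\<lambda>f. (\<lambda>e. f ` e) ` E) ` ({..<n} \<rightarrow>\<^sub>E {..<n})" by blast
  qed
  have "card {F \<in> graphs n. graph_iso n E n F} \<le> card ((\<lambda>f. (\<lambda>e. f ` e) ` E) ` ({..<n} \<rightarrow>\<^sub>E {..<n}))"
    by (rule card_mono[OF _ sub]) (simp add: finite_PiE)
  also have "\<dots> \<le> card ({..<n} \<rightarrow>\<^sub>E ({..<n}::nat set))"
    by (rule card_image_le) (simp add: finite_PiE)
  also have "\<dots> = n ^ n" by (simp add: card_PiE)
  finally show ?thesis .
qed

lemma iso_classes_finite: "finite (iso_classes n)"
proof -
  have "iso_classes n \<subseteq> Pow (graphs n)" unfolding iso_classes_def by auto
  then show ?thesis using graphs_finite finite_subset by blast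
qed

lemma iso_lower: "2 ^ (n choose 2) \<le> card (iso_classes n) * n ^ n"
proof -
  have "graphs n \<subseteq> \<Union>(iso_classes n)"
    unfolding iso_classes_def using iso_refl by blast
  then have "card (graphs n) \<le> card (\<Union>(iso_classes n))"
    by (rule card_mono[rotated]) (rule finite_subset[of _ "graphs n"], auto simp: iso_classes_def graphs_finite)
  also have "\<dots> \<le> sum card (iso_classes n)"
    by (rule card_Union_le_sum_card)
  also have "\<dots> \<le> card (iso_classes n) * n ^ n"
    using sum_bounded_above[of "iso_classes n" card "n ^ n"] class_card
    unfolding iso_classes_def by auto
  finally show ?thesis by (simp add: graphs_card)
qed

lemma vdeg_le:
  assumes "E \<in> graphs n" "v < n"
  shows "vdeg E v \<le> n"
proof -
  have "{e \<in> E. v \<in> e} \<subseteq> (\<lambda>w. {v, w}) ` {..<n}"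
  proof
    fix e assume e: "e \<in> {e \<in> E. v \<in> e}"
    then have "card e = 2" "e \<subseteq> {..<n}" using assms(1) unfolding graphs_def by auto
    then obtain x y where xy: "e = {x, y}" "x \<noteq> y" by (auto simp: card_2_iff)
    have ve: "v \<in> e" using e by simp
    show "e \<in> (\<lambda>w. {v, w}) ` {..<n}"
    proof (cases "v = x")
      case True
      then have "e = {v, y}" "y \<in> {..<n}" using xy \<open>e \<subseteq> {..<n}\<close> by auto
      then show ?thesis by blast
    next
      case False
      then have "v = y" using xy ve by blast
      then have "e = {v, x}" "x \<in> {..<n}" using xy \<open>e \<subseteq> {..<n}\<close> by auto
      then show ?thesis by blast
    qed
  qed
  then have "vdeg E v \<le> card ((\<lambda>w. {v, w}) ` {..<n})"
    unfolding vdeg_def by (intro card_mono) auto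
  also have "\<dots> \<le> n" using card_image_le[of "{..<n}" "\<lambda>w. {v, w}"] by simp
  finally show ?thesis .
qed

definition D :: "nat \<Rightarrow> nat set set \<Rightarrow> nat \<Rightarrow> nat" where
  "D n E = restrict (vdeg E) {..<n}"

lemma unique_upper: "card (unique_classes n) \<le> (n + 1) ^ n"
proof -
  define pick where "pick C = (SOME E. E \<in> C \<and> deg_unique n E)" for C
  have pick: "pick C \<in> C \<and> deg_unique n (pick C)" if "C \<in> unique_classes n" for C
  proof -
    have "\<exists>E. E \<in> C \<and> deg_unique n E" using that unfolding unique_classes_def by auto
    then show ?thesis unfolding pick_def by (rule someI_ex)
  qed
  have clsub: "C \<subseteq> graphs n" if "C \<in> iso_classes n" for C
    using that unfolding iso_classes_def by auto
  have inj: "inj_on (\<lambda>C. D n (pick C)) (unique_classes n)"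
  proof
    fix C1 C2 assume C1: "C1 \<in> unique_classes n" and C2: "C2 \<in> unique_classes n"
      and eq: "D n (pick C1) = D n (pick C2)"
    let ?E1 = "pick C1" and ?E2 = "pick C2"
    have I1: "C1 \<in> iso_classes n" and I2: "C2 \<in> iso_classes n"
      using C1 C2 unfolding unique_classes_def by auto
    have E1: "?E1 \<in> C1" "deg_unique n ?E1" using pick C1 by auto
    have E2: "?E2 \<in> C2" using pick C2 by auto
    have G1: "?E1 \<in> graphs n" using E1 clsub I1 by auto
    have G2: "?E2 \<in> graphs n" using E2 clsub I2 by auto
    have "deg_poly n ?E1 = deg_poly n ?E2"
    proof -
      have "\<And>v. v < n \<Longrightarrow> vdeg ?E1 v = vdeg ?E2 v"
        using eq unfolding D_def by (metis lessThan_iff restrict_apply')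
      then show ?thesis unfolding deg_poly_def by (intro sum.cong) auto
    qed
    note dp = this
    have "\<forall>m F. F \<in> graphs m \<and> deg_poly m F = deg_poly n ?E1 \<longrightarrow> graph_iso n ?E1 m F"
      using E1(2) unfolding deg_unique_def .
    then have "?E2 \<in> graphs n \<and> deg_poly n ?E2 = deg_poly n ?E1 \<longrightarrow> graph_iso n ?E1 n ?E2"
      by (elim allE)
    then have iso12: "graph_iso n ?E1 n ?E2" using G2 dp by simp
    obtain A where A: "A \<in> graphs n" "C1 = {F \<in> graphs n. graph_iso n A n F}"
      using I1 unfolding iso_classes_def by auto
    obtain B where B: "B \<in> graphs n" "C2 = {F \<in> graphs n. graph_iso n B n F}"
      using I2 unfolding iso_classes_def by auto
    have "graph_iso n A n ?E1" using A E1 by auto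
    have "graph_iso n B n ?E2" using B E2 by auto
    have AB: "graph_iso n A n B"
      using iso_trans[OF iso_trans[OF \<open>graph_iso n A n (pick C1)\<close> iso12] iso_sym[OF B(1) \<open>graph_iso n B n (pick C2)\<close>]] .
    have BA: "graph_iso n B n A" using AB A(1) iso_sym by blast
    show "C1 = C2" unfolding A(2) B(2) using AB BA iso_trans by blast
  qed
  have img: "(\<lambda>C. D n (pick C)) ` unique_classes n \<subseteq> {..<n} \<rightarrow>\<^sub>E {..n}"
  proof
    fix x assume "x \<in> (\<lambda>C. D n (pick C)) ` unique_classes n"
    then obtain C where C: "C \<in> unique_classes n" "x = D n (pick C)" by blast
    then have "pick C \<in> graphs n" using pick clsub unfolding unique_classes_def by auto
    then show "x \<in> {..<n} \<rightarrow>\<^sub>E {..n}" using C(2) vdeg_le unfolding D_def by auto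
  qed
  have "card (unique_classes n) = card ((\<lambda>C. D n (pick C)) ` unique_classes n)"
    using inj by (simp add: card_image)
  also have "\<dots> \<le> card ({..<n} \<rightarrow>\<^sub>E {..n})"
    by (rule card_mono[OF _ img]) (simp add: finite_PiE)
  also have "\<dots> = (n + 1) ^ n" by (simp add: card_PiE)
  finally show ?thesis .
qed

lemma real_choose2: "real (n choose 2) = real n * (real n - 1) / 2"
proof -
  have "even (n * (n - 1))" by auto
  then have "real (n * (n - 1) div 2) = real (n * (n - 1)) / 2"
    by (simp add: real_of_nat_div)
  moreover have "real (n * (n - 1)) = real n * (real n - 1)"
    by (cases n) (auto simp: algebra_simps)
  ultimately show ?thesis by (simp add: choose_two)
qed

lemma bound:
  assumes "n \<ge> 1"
  shows "real (card (unique_classes n)) / real (card (iso_classes n))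
     \<le> (real n + 1) powr real n * real n powr real n / 2 powr (real n * (real n - 1) / 2)"
proof -
  have pos: "card (iso_classes n) > 0"
    using iso_lower[of n] by (cases "card (iso_classes n)") auto
  have U: "real (card (unique_classes n)) \<le> (real n + 1) ^ n"
    using unique_upper[of n] by (metis of_nat_1 of_nat_add of_nat_le_iff of_nat_power)
  have L: "2 powr (real n * (real n - 1) / 2) \<le> real (card (iso_classes n)) * real n ^ n"
  proof -
    have "2 powr (real n * (real n - 1) / 2) = real (2 ^ (n choose 2))"
      by (simp add: real_choose2[symmetric] powr_realpow)
    also have "\<dots> \<le> real (card (iso_classes n) * n ^ n)"
      using iso_lower by (simp only: of_nat_le_iff)
    finally show ?thesis by simp
  qed
  have np: "real n > 0" using assms by simp
  have "real (card (unique_classes n)) / real (card (iso_classes n))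
      \<le> (real n + 1) ^ n / real (card (iso_classes n))"
    using U pos by (simp add: divide_right_mono)
  also have "\<dots> = (real n + 1) ^ n * real n ^ n / (real (card (iso_classes n)) * real n ^ n)"
    using np by simp
  also have "\<dots> \<le> (real n + 1) ^ n * real n ^ n / 2 powr (real n * (real n - 1) / 2)"
    by (rule divide_left_mono[OF L]) (use pos np in auto)
  also have "\<dots> = (real n + 1) powr real n * real n powr real n / 2 powr (real n * (real n - 1) / 2)"
    using np by (simp add: powr_realpow)
  finally show ?thesis .
qed

theorem theorem1:
  shows "(\<lambda>n. real (card (unique_classes n)) / real (card (iso_classes n))) \<longlonglongrightarrow> 0"
proof (rule tendsto_sandwich[of "\<lambda>_. 0" _ _ "\<lambda>n::nat. (real n + 1) powr real n * real n powr real n / 2 powr (real n * (real n - 1) / 2)"])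
  show "\<forall>\<^sub>F n in sequentially. 0 \<le> real (card (unique_classes n)) / real (card (iso_classes n))"
    by simp
  show "\<forall>\<^sub>F n in sequentially. real (card (unique_classes n)) / real (card (iso_classes n))
     \<le> (real n + 1) powr real n * real n powr real n / 2 powr (real n * (real n - 1) / 2)"
    by (rule eventually_sequentiallyI[of 1]) (rule bound)
  show "(\<lambda>_. 0::real) \<longlonglongrightarrow> 0" by simp
  show "(\<lambda>n::nat. (real n + 1) powr real n * real n powr real n / 2 powr (real n * (real n - 1) / 2)) \<longlonglongrightarrow> 0"
    by (rule lim_bound)
qed

end
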